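(* $\mathsf{MGrz}\vee\mathsf{GKur}=\mathsf{MGrz}\vee\mathsf{LKur}=\mathsf{MGrz}\vee\mathsf{N}$, where $\vee$ denotes the smallest extension of $\mathsf{MS4}$ containing both logics.
   Context: $\mathsf{MIPC}$ is the smallest set of formulas in the bimodal language $\mathcal{L}_{\forall\exists}$ containing all theorems of $\mathsf{IPC}$; $\forall(p\wedge q)\leftrightarrow(\forall p\wedge\forall q)$, $\forall p\to p$, $\forall p\to\forall\forall p$; $\exists(p\vee q)\leftrightarrow(\exists p\vee\exists q)$, $p\to\exists p$, $\exists\exists p\to\exists p$, $(\exists p\wedge\exists q)\to\exists(\exists p\wedge q)$; $\exists\forall p\to\forall p$, $\exists p\to\forall\exists p$; closed under modus ponens, substitution and $\varphi/\forall\varphi$. $\mathsf{Kur}=\mathsf{MIPC}+\forall\neg\neg p\to\neg\neg\forall p$. $\mathsf{MS4}$ is the smallest set of formulas in the classical bimodal language $\mathcal{L}_{\Box\forall}$ containing all classical tautologies, the $\mathsf{S4}$ axioms for $\Box$, the $\mathsf{S5}$ axioms for $\forall$, and $\Box\forall p\to\forall\Box p$, closed under modus ponens, substitution, $\Box$- and $\forall$-necessitation; $\Diamond=\neg\Box\neg$, $\exists=\neg\forall\neg$. $\mathsf{MGrz}=\mathsf{MS4}+\Box(\Box(p\to\Box p)\to p)\to p$; $\mathsf{LKur}=\mathsf{MS4}+\Box\forall\Diamond\Box p\to\Diamond\forall p$; $\mathsf{N}=\mathsf{MS4}+\Box\exists p\to\Diamond\exists\Box p$; $\mathsf{GKur}=\mathsf{MS4}+\{\varphi^t:\mathsf{Kur}\vdash\varphi\}$,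 where $(-)^t$ is the Gödel translation: $\bot^t=\bot$, $p^t=\Box p$, $(\varphi\wedge\psi)^t=\varphi^t\wedge\psi^t$, $(\varphi\vee\psi)^t=\varphi^t\vee\psi^t$, $(\varphi\to\psi)^t=\Box(\neg\varphi^t\vee\psi^t)$, $(\forall\varphi)^t=\Box\forall\varphi^t$, $(\exists\varphi)^t=\exists\varphi^t$. *)

theory Defs
  imports Main
begin

datatype ifm = IBot | IVar nat | IAnd ifm ifm | IOr ifm ifm | IImp ifm ifm
  | IAll ifm | IEx ifm

definition INeg :: "ifm \<Rightarrow> ifm" where "INeg a = IImp a IBot"
definition IIff :: "ifm \<Rightarrow> ifm \<Rightarrow> ifm" where "IIff a b = IAnd (IImp a b) (IImp b a)"

primrec isubst :: "(nat \<Rightarrow> ifm) \<Rightarrow> ifm \<Rightarrow> ifm" where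
  "isubst s IBot = IBot"
| "isubst s (IVar n) = s n"
| "isubst s (IAnd a b) = IAnd (isubst s a) (isubst s b)"
| "isubst s (IOr a b) = IOr (isubst s a) (isubst s b)"
| "isubst s (IImp a b) = IImp (isubst s a) (isubst s b)"
| "isubst s (IAll a) = IAll (isubst s a)"
| "isubst s (IEx a) = IEx (isubst s a)"

abbreviation "ip \<equiv> IVar 0"
abbreviation "iq \<equiv> IVar 1"
abbreviation "ir \<equiv> IVar 2"

definition IPC_axioms :: "ifm set" where
  "IPC_axioms = {
     IImp ip (IImp iq ip),
     IImp (IImp ip (IImp iq ir)) (IImp (IImp ip iq) (IImp ip ir)),
     IImp (IAnd ip iq) ip,
     IImp (IAnd ip iq) iq,
     IImp ip (IImp iq (IAnd ip iq)),
     IImp ip (IOr ip iq),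
     IImp iq (IOr ip iq),
     IImp (IImp ip ir) (IImp (IImp iq ir) (IImp (IOr ip iq) ir)),
     IImp IBot ip }"

definition MIPC_axioms :: "ifm set" where
  "MIPC_axioms = {
     IIff (IAll (IAnd ip iq)) (IAnd (IAll ip) (IAll iq)),
     IImp (IAll ip) ip,
     IImp (IAll ip) (IAll (IAll ip)),
     IIff (IEx (IOr ip iq)) (IOr (IEx ip) (IEx iq)),
     IImp ip (IEx ip),
     IImp (IEx (IEx ip)) (IEx ip),
     IImp (IAnd (IEx ip) (IEx iq)) (IEx (IAnd (IEx ip) iq)),
     IImp (IEx (IAll ip)) (IAll ip),
     IImp (IEx ip) (IAll (IEx ip)) }"

inductive_set MIPC_ext :: "ifm set \<Rightarrow> ifm set" for G :: "ifm set" where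
  ipc: "a \<in> IPC_axioms \<Longrightarrow> a \<in> MIPC_ext G"
| ax: "a \<in> MIPC_axioms \<Longrightarrow> a \<in> MIPC_ext G"
| extra: "a \<in> G \<Longrightarrow> a \<in> MIPC_ext G"
| mp: "IImp a b \<in> MIPC_ext G \<Longrightarrow> a \<in> MIPC_ext G \<Longrightarrow> b \<in> MIPC_ext G"
| subst: "a \<in> MIPC_ext G \<Longrightarrow> isubst s a \<in> MIPC_ext G"
| nec: "a \<in> MIPC_ext G \<Longrightarrow> IAll a \<in> MIPC_ext G"

definition MIPC :: "ifm set" where "MIPC = MIPC_ext {}"

definition Kur :: "ifm set" where
  "Kur = MIPC_ext {IImp (IAll (INeg (INeg ip))) (INeg (INeg (IAll ip)))}"

datatype cfm = CBot | CVar nat | CAnd cfm cfm | COr cfm cfm | CImp cfm cfm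
  | CBox cfm | CAll cfm

definition CNeg :: "cfm \<Rightarrow> cfm" where "CNeg a = CImp a CBot"
definition CDia :: "cfm \<Rightarrow> cfm" where "CDia a = CNeg (CBox (CNeg a))"
definition CEx :: "cfm \<Rightarrow> cfm" where "CEx a = CNeg (CAll (CNeg a))"

primrec csubst :: "(nat \<Rightarrow> cfm) \<Rightarrow> cfm \<Rightarrow> cfm" where
  "csubst s CBot = CBot"
| "csubst s (CVar n) = s n"
| "csubst s (CAnd a b) = CAnd (csubst s a) (csubst s b)"
| "csubst s (COr a b) = COr (csubst s a) (csubst s b)"
| "csubst s (CImp a b) = CImp (csubst s a) (csubst s b)"
| "csubst s (CBox a) = CBox (csubst s a)"
| "csubst s (CAll a) = CAll (csubst s a)"

text \<open>Classical truth-functional evaluation, treating variables and modalised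
subformulas as atoms; tautologies are the formulas true under every such valuation
(this includes all substitution instances of propositional tautologies).\<close>

primrec peval :: "(cfm \<Rightarrow> bool) \<Rightarrow> cfm \<Rightarrow> bool" where
  "peval v CBot = False"
| "peval v (CVar n) = v (CVar n)"
| "peval v (CAnd a b) = (peval v a \<and> peval v b)"
| "peval v (COr a b) = (peval v a \<or> peval v b)"
| "peval v (CImp a b) = (peval v a \<longrightarrow> peval v b)"
| "peval v (CBox a) = v (CBox a)"
| "peval v (CAll a) = v (CAll a)"

definition tautology :: "cfm \<Rightarrow> bool" where
  "tautology a = (\<forall>v. peval v a)"

abbreviation "cp \<equiv> CVar 0"
abbreviation "cq \<equiv> CVar 1"

definition MS4_axioms :: "cfm set" where
  "MS4_axioms = {
     CImp (CBox (CImp cp cq)) (CImp (CBox cp) (CBox cq)),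
     CImp (CBox cp) cp,
     CImp (CBox cp) (CBox (CBox cp)),
     CImp (CAll (CImp cp cq)) (CImp (CAll cp) (CAll cq)),
     CImp (CAll cp) cp,
     CImp (CAll cp) (CAll (CAll cp)),
     CImp (CEx cp) (CAll (CEx cp)),
     CImp (CBox (CAll cp)) (CAll (CBox cp)) }"

inductive_set MS4_ext :: "cfm set \<Rightarrow> cfm set" for G :: "cfm set" where
  taut: "tautology a \<Longrightarrow> a \<in> MS4_ext G"
| ax: "a \<in> MS4_axioms \<Longrightarrow> a \<in> MS4_ext G"
| extra: "a \<in> G \<Longrightarrow> a \<in> MS4_ext G"
| mp: "CImp a b \<in> MS4_ext G \<Longrightarrow> a \<in> MS4_ext G \<Longrightarrow> b \<in> MS4_ext G"
| subst: "a \<in> MS4_ext G \<Longrightarrow> csubst s a \<in> MS4_ext G"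
| nec_box: "a \<in> MS4_ext G \<Longrightarrow> CBox a \<in> MS4_ext G"
| nec_all: "a \<in> MS4_ext G \<Longrightarrow> CAll a \<in> MS4_ext G"

definition MS4 :: "cfm set" where "MS4 = MS4_ext {}"

primrec goedel :: "ifm \<Rightarrow> cfm" where
  "goedel IBot = CBot"
| "goedel (IVar n) = CBox (CVar n)"
| "goedel (IAnd a b) = CAnd (goedel a) (goedel b)"
| "goedel (IOr a b) = COr (goedel a) (goedel b)"
| "goedel (IImp a b) = CBox (COr (CNeg (goedel a)) (goedel b))"
| "goedel (IAll a) = CBox (CAll (goedel a))"
| "goedel (IEx a) = CEx (goedel a)"

definition MGrz :: "cfm set" where
  "MGrz = MS4_ext {CImp (CBox (CImp (CBox (CImp cp (CBox cp))) cp)) cp}"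

definition LKur :: "cfm set" where
  "LKur = MS4_ext {CImp (CBox (CAll (CDia (CBox cp)))) (CDia (CAll cp))}"

definition Nlogic :: "cfm set" where
  "Nlogic = MS4_ext {CImp (CBox (CEx cp)) (CDia (CEx (CBox cp)))}"

definition GKur :: "cfm set" where
  "GKur = MS4_ext (goedel ` Kur)"

definition join :: "cfm set \<Rightarrow> cfm set \<Rightarrow> cfm set" where
  "join L1 L2 = MS4_ext (L1 \<union> L2)"

end

theory Submission imports Defs begin

lemma csubst_CNeg[simp]: "csubst s (CNeg a) = CNeg (csubst s a)" by (simp add: CNeg_def)
lemma csubst_CEx[simp]: "csubst s (CEx a) = CEx (csubst s a)" by (simp add: CEx_def)
lemma csubst_CDia[simp]: "csubst s (CDia a) = CDia (csubst s a)" by (simp add: CDia_def)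

lemmas pd = CNeg_def CDia_def CEx_def

lemma PR: "set As \<subseteq> MS4_ext G \<Longrightarrow> (\<And>v. (\<forall>a\<in>set As. peval v a) \<Longrightarrow> peval v b) \<Longrightarrow> b \<in> MS4_ext G"
proof (induction As arbitrary: b)
  case Nil then show ?case by (auto intro: MS4_ext.taut simp: tautology_def)
next
  case (Cons a As)
  have "CImp a b \<in> MS4_ext G" using Cons.IH[of "CImp a b"] Cons.prems by auto
  then show ?case using Cons.prems(1) by (auto intro: MS4_ext.mp)
qed

lemma PR0: "(\<And>v. peval v b) \<Longrightarrow> b \<in> MS4_ext G"
  using PR[of "[]"] by auto
lemma PR1: "a \<in> MS4_ext G \<Longrightarrow> (\<And>v. peval v a \<Longrightarrow> peval v b) \<Longrightarrow> b \<in> MS4_ext G"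
  using PR[of "[a]"] by auto
lemma PR2: "a \<in> MS4_ext G \<Longrightarrow> a2 \<in> MS4_ext G \<Longrightarrow> (\<And>v. peval v a \<Longrightarrow> peval v a2 \<Longrightarrow> peval v b) \<Longrightarrow> b \<in> MS4_ext G"
  using PR[of "[a,a2]"] by auto
lemma PR3: "a \<in> MS4_ext G \<Longrightarrow> a2 \<in> MS4_ext G \<Longrightarrow> a3 \<in> MS4_ext G \<Longrightarrow> (\<And>v. peval v a \<Longrightarrow> peval v a2 \<Longrightarrow> peval v a3 \<Longrightarrow> peval v b) \<Longrightarrow> b \<in> MS4_ext G"
  using PR[of "[a,a2,a3]"] by auto
lemma PR4: "a \<in> MS4_ext G \<Longrightarrow> a2 \<in> MS4_ext G \<Longrightarrow> a3 \<in> MS4_ext G \<Longrightarrow> a4 \<in> MS4_ext G \<Longrightarrow> (\<And>v. peval v a \<Longrightarrow> peval v a2 \<Longrightarrow> peval v a3 \<Longrightarrow> peval v a4 \<Longrightarrow> peval v b) \<Longrightarrow> b \<in> MS4_ext G"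
  using PR[of "[a,a2,a3,a4]"] by auto

lemma PR5: "a \<in> MS4_ext G \<Longrightarrow> a2 \<in> MS4_ext G \<Longrightarrow> a3 \<in> MS4_ext G \<Longrightarrow> a4 \<in> MS4_ext G \<Longrightarrow> a5 \<in> MS4_ext G \<Longrightarrow> (\<And>v. peval v a \<Longrightarrow> peval v a2 \<Longrightarrow> peval v a3 \<Longrightarrow> peval v a4 \<Longrightarrow> peval v a5 \<Longrightarrow> peval v b) \<Longrightarrow> b \<in> MS4_ext G"
  using PR[of "[a,a2,a3,a4,a5]"] by auto

lemma ax_inst: "a \<in> MS4_axioms \<Longrightarrow> csubst s a \<in> MS4_ext G"
  by (intro MS4_ext.subst MS4_ext.ax)

lemma Kbox: "CImp (CBox (CImp a b)) (CImp (CBox a) (CBox b)) \<in> MS4_ext G"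
  using ax_inst[of "CImp (CBox (CImp cp cq)) (CImp (CBox cp) (CBox cq))" "\<lambda>n. if n = 0 then a else b" G]
  by (simp add: MS4_axioms_def)
lemma Tbox: "CImp (CBox a) a \<in> MS4_ext G"
  using ax_inst[of "CImp (CBox cp) cp" "\<lambda>n. a" G] by (simp add: MS4_axioms_def)
lemma Fbox: "CImp (CBox a) (CBox (CBox a)) \<in> MS4_ext G"
  using ax_inst[of "CImp (CBox cp) (CBox (CBox cp))" "\<lambda>n. a" G] by (simp add: MS4_axioms_def)
lemma Kall: "CImp (CAll (CImp a b)) (CImp (CAll a) (CAll b)) \<in> MS4_ext G"
  using ax_inst[of "CImp (CAll (CImp cp cq)) (CImp (CAll cp) (CAll cq))" "\<lambda>n. if n = 0 then a else b" G]
  by (simp add: MS4_axioms_def)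
lemma Tall: "CImp (CAll a) a \<in> MS4_ext G"
  using ax_inst[of "CImp (CAll cp) cp" "\<lambda>n. a" G] by (simp add: MS4_axioms_def)
lemma Fall: "CImp (CAll a) (CAll (CAll a)) \<in> MS4_ext G"
  using ax_inst[of "CImp (CAll cp) (CAll (CAll cp))" "\<lambda>n. a" G] by (simp add: MS4_axioms_def)
lemma Vall: "CImp (CEx a) (CAll (CEx a)) \<in> MS4_ext G"
  using ax_inst[of "CImp (CEx cp) (CAll (CEx cp))" "\<lambda>n. a" G] by (simp add: MS4_axioms_def)
lemma BC: "CImp (CBox (CAll a)) (CAll (CBox a)) \<in> MS4_ext G"
  using ax_inst[of "CImp (CBox (CAll cp)) (CAll (CBox cp))" "\<lambda>n. a" G] by (simp add: MS4_axioms_def)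

lemma mp': "CImp a b \<in> MS4_ext G \<Longrightarrow> a \<in> MS4_ext G \<Longrightarrow> b \<in> MS4_ext G"
  by (rule MS4_ext.mp)

lemma box_mono: "CImp a b \<in> MS4_ext G \<Longrightarrow> CImp (CBox a) (CBox b) \<in> MS4_ext G"
  using MS4_ext.nec_box Kbox mp' by blast
lemma all_mono: "CImp a b \<in> MS4_ext G \<Longrightarrow> CImp (CAll a) (CAll b) \<in> MS4_ext G"
  using MS4_ext.nec_all Kall mp' by blast

lemma box_and: "CImp (CAnd (CBox a) (CBox b)) (CBox (CAnd a b)) \<in> MS4_ext G"
proof -
  have 1: "CImp (CBox a) (CBox (CImp b (CAnd a b))) \<in> MS4_ext G"
    by (rule box_mono, rule PR0) auto
  show ?thesis by (rule PR2[OF 1 Kbox]) auto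
qed
lemma all_and: "CImp (CAnd (CAll a) (CAll b)) (CAll (CAnd a b)) \<in> MS4_ext G"
proof -
  have 1: "CImp (CAll a) (CAll (CImp b (CAnd a b))) \<in> MS4_ext G"
    by (rule all_mono, rule PR0) auto
  show ?thesis by (rule PR2[OF 1 Kall]) auto
qed

lemma box_mono2: assumes "CImp (CAnd a b) c \<in> MS4_ext G" shows "CImp (CAnd (CBox a) (CBox b)) (CBox c) \<in> MS4_ext G"
  by (rule PR2[OF box_mono[OF assms] box_and[of a b]]) auto
lemma all_mono2: assumes "CImp (CAnd a b) c \<in> MS4_ext G" shows "CImp (CAnd (CAll a) (CAll b)) (CAll c) \<in> MS4_ext G"
  by (rule PR2[OF all_mono[OF assms] all_and[of a b]]) auto

lemma dia_mono: "CImp a b \<in> MS4_ext G \<Longrightarrow> CImp (CDia a) (CDia b) \<in> MS4_ext G"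
proof -
  assume "CImp a b \<in> MS4_ext G"
  then have "CImp (CNeg b) (CNeg a) \<in> MS4_ext G" by (rule PR1) (auto simp: pd)
  then show ?thesis by (rule PR1[OF box_mono]) (auto simp: pd)
qed
lemma ex_mono: "CImp a b \<in> MS4_ext G \<Longrightarrow> CImp (CEx a) (CEx b) \<in> MS4_ext G"
proof -
  assume "CImp a b \<in> MS4_ext G"
  then have "CImp (CNeg b) (CNeg a) \<in> MS4_ext G" by (rule PR1) (auto simp: pd)
  then show ?thesis by (rule PR1[OF all_mono]) (auto simp: pd)
qed

lemma diaT: "CImp a (CDia a) \<in> MS4_ext G"
  by (rule PR1[OF Tbox[of "CNeg a"]]) (auto simp: pd)

lemma dia4: "CImp (CDia (CDia a)) (CDia a) \<in> MS4_ext G"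
proof -
  have 1: "CImp (CBox (CBox (CNeg a))) (CBox (CNeg (CNeg (CBox (CNeg a))))) \<in> MS4_ext G"
    by (rule box_mono, rule PR0) (auto simp: pd)
  show ?thesis by (rule PR2[OF 1 Fbox[of "CNeg a"]]) (auto simp: pd)
qed

lemma box_dia: "CImp (CAnd (CBox x) (CDia y)) (CDia (CAnd x y)) \<in> MS4_ext G"
proof -
  have 1: "CImp (CBox x) (CBox (CImp (CNeg (CAnd x y)) (CNeg y))) \<in> MS4_ext G"
    by (rule box_mono, rule PR0) (auto simp: pd)
  show ?thesis by (rule PR2[OF 1 Kbox]) (auto simp: pd)
qed

lemma exT: "CImp a (CEx a) \<in> MS4_ext G"
  by (rule PR1[OF Tall[of "CNeg a"]]) (auto simp: pd)

lemma ex4: "CImp (CEx (CEx a)) (CEx a) \<in> MS4_ext G"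
proof -
  have 1: "CImp (CAll (CAll (CNeg a))) (CAll (CNeg (CNeg (CAll (CNeg a))))) \<in> MS4_ext G"
    by (rule all_mono, rule PR0) (auto simp: pd)
  show ?thesis by (rule PR2[OF 1 Fall[of "CNeg a"]]) (auto simp: pd)
qed

lemma all_ex: "CImp (CAnd (CAll x) (CEx y)) (CEx (CAnd x y)) \<in> MS4_ext G"
proof -
  have 1: "CImp (CAll x) (CAll (CImp (CNeg (CAnd x y)) (CNeg y))) \<in> MS4_ext G"
    by (rule all_mono, rule PR0) (auto simp: pd)
  show ?thesis by (rule PR2[OF 1 Kall]) (auto simp: pd)
qed

lemma ex_or: "CImp (CEx (COr a b)) (COr (CEx a) (CEx b)) \<in> MS4_ext G"
proof -
  have 1: "CImp (CAnd (CAll (CNeg a)) (CAll (CNeg b))) (CAll (CNeg (COr a b))) \<in> MS4_ext G"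
    by (rule all_mono2, rule PR0) (auto simp: pd)
  show ?thesis by (rule PR1[OF 1]) (auto simp: pd)
qed

lemma or_ex: "CImp (COr (CEx a) (CEx b)) (CEx (COr a b)) \<in> MS4_ext G"
proof -
  have 1: "CImp (CEx a) (CEx (COr a b)) \<in> MS4_ext G" by (rule ex_mono, rule PR0) auto
  have 2: "CImp (CEx b) (CEx (COr a b)) \<in> MS4_ext G" by (rule ex_mono, rule PR0) auto
  show ?thesis by (rule PR2[OF 1 2]) auto
qed

lemma ex_all_T: "CImp (CEx (CAll w)) (CAll w) \<in> MS4_ext G"
proof -
  have 1: "CImp (CAll (CNeg (CNeg w))) (CAll w) \<in> MS4_ext G" by (rule all_mono, rule PR0) (auto simp: pd)
  have 2: "CImp (CAll w) (CAll (CNeg (CNeg w))) \<in> MS4_ext G" by (rule all_mono, rule PR0) (auto simp: pd)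
  have 3: "CImp (CEx (CNeg w)) (CNeg (CAll w)) \<in> MS4_ext G" by (rule PR1[OF 2]) (auto simp: pd)
  have 4: "CImp (CAll (CEx (CNeg w))) (CAll (CNeg (CAll w))) \<in> MS4_ext G" by (rule all_mono[OF 3])
  show ?thesis by (rule PR3[OF 1 4 Vall[of "CNeg w"]]) (auto simp: pd)
qed

lemma box_all_closed: "CImp (CBox (CAll d)) (CAll (CBox (CAll d))) \<in> MS4_ext G"
  by (rule PR2[OF box_mono[OF Fall] BC[of "CAll d"]]) auto

lemma box_ex_closed: "CImp (CBox (CEx z)) (CAll (CBox (CEx z))) \<in> MS4_ext G"
  by (rule PR3[OF box_mono[OF Vall] box_all_closed all_mono[OF box_mono[OF Tall]]]) auto

lemma ex_box: "CImp (CEx (CBox z)) (CBox (CEx z)) \<in> MS4_ext G"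
  by (rule PR4[OF ex_mono[OF box_mono[OF exT]] ex_mono[OF box_ex_closed] ex_all_T Tall]) auto

definition boxed :: "cfm set \<Rightarrow> cfm \<Rightarrow> bool" where
  "boxed G a = (CImp a (CBox a) \<in> MS4_ext G)"

lemma boxed_box: "boxed G (CBox a)" unfolding boxed_def by (rule Fbox)
lemma boxed_bot: "boxed G CBot" unfolding boxed_def by (rule PR0) auto
lemma boxed_and: assumes "boxed G a" "boxed G b" shows "boxed G (CAnd a b)"
  using assms unfolding boxed_def by (intro PR3[OF assms(1)[unfolded boxed_def] assms(2)[unfolded boxed_def] box_and[of a b]]) auto
lemma boxed_or: assumes "boxed G a" "boxed G b" shows "boxed G (COr a b)"
proof -
  have 1: "CImp (CBox a) (CBox (COr a b)) \<in> MS4_ext G" by (rule box_mono, rule PR0) auto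
  have 2: "CImp (CBox b) (CBox (COr a b)) \<in> MS4_ext G" by (rule box_mono, rule PR0) auto
  show ?thesis using assms unfolding boxed_def by (rule PR4[OF _ _ 1 2]) auto
qed
lemma boxed_ex: assumes "boxed G a" shows "boxed G (CEx a)"
  using assms unfolding boxed_def by (rule PR2[OF ex_mono ex_box]) auto

lemma boxed_imp: assumes "boxed G z" "CImp (CAnd z a) c \<in> MS4_ext G"
  shows "CImp z (CBox (COr (CNeg a) c)) \<in> MS4_ext G"
proof -
  have "CImp z (COr (CNeg a) c) \<in> MS4_ext G" by (rule PR1[OF assms(2)]) (auto simp: pd)
  from box_mono[OF this] show ?thesis using assms(1) unfolding boxed_def by (rule PR2) auto
qed

lemma nec_imp: "CImp a c \<in> MS4_ext G \<Longrightarrow> CBox (COr (CNeg a) c) \<in> MS4_ext G"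
  by (rule MS4_ext.nec_box, erule PR1) (auto simp: pd)

lemma boxed_goedel: "boxed G (goedel a)"
  by (induction a) (auto intro: boxed_box boxed_bot boxed_and boxed_or boxed_ex)

lemma isubst_comp: "isubst s (isubst s' a) = isubst (\<lambda>n. isubst s (s' n)) a"
  by (induction a) auto

lemma isubst_id: "isubst IVar a = a"
  by (induction a) auto

lemma Tb: "CBox a \<in> MS4_ext G \<Longrightarrow> a \<in> MS4_ext G"
  using Tbox mp' by blast

section \<open>IPC axioms\<close>

lemma ipc1: assumes "boxed G A" shows "CBox (COr (CNeg A) (CBox (COr (CNeg B) A))) \<in> MS4_ext G"
  by (rule nec_imp, rule boxed_imp[OF assms], rule PR0) auto

lemma ipc2: assumes "boxed G A" "boxed G B" "boxed G C"
  shows "CBox (COr (CNeg (CBox (COr (CNeg A) (CBox (COr (CNeg B) C)))))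
     (CBox (COr (CNeg (CBox (COr (CNeg A) B))) (CBox (COr (CNeg A) C))))) \<in> MS4_ext G"
proof -
  let ?X = "CBox (COr (CNeg A) (CBox (COr (CNeg B) C)))"
  let ?Y = "CBox (COr (CNeg A) B)"
  have 1: "CImp (CAnd (CAnd ?X ?Y) A) C \<in> MS4_ext G"
    by (rule PR3[OF Tbox[of "COr (CNeg A) (CBox (COr (CNeg B) C))"] Tbox[of "COr (CNeg A) B"]
       Tbox[of "COr (CNeg B) C"]]) (auto simp: pd)
  have 2: "CImp (CAnd ?X ?Y) (CBox (COr (CNeg A) C)) \<in> MS4_ext G"
    by (rule boxed_imp[OF boxed_and[OF boxed_box boxed_box] 1])
  show ?thesis by (rule nec_imp, rule boxed_imp[OF boxed_box 2])
qed

lemma ipc3: "CBox (COr (CNeg (CAnd A B)) A) \<in> MS4_ext G"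
  by (rule nec_imp, rule PR0) auto
lemma ipc4: "CBox (COr (CNeg (CAnd A B)) B) \<in> MS4_ext G"
  by (rule nec_imp, rule PR0) auto
lemma ipc5: assumes "boxed G A" shows "CBox (COr (CNeg A) (CBox (COr (CNeg B) (CAnd A B)))) \<in> MS4_ext G"
  by (rule nec_imp, rule boxed_imp[OF assms], rule PR0) auto
lemma ipc6: "CBox (COr (CNeg A) (COr A B)) \<in> MS4_ext G"
  by (rule nec_imp, rule PR0) auto
lemma ipc7: "CBox (COr (CNeg B) (COr A B)) \<in> MS4_ext G"
  by (rule nec_imp, rule PR0) auto
lemma ipc8: 
  shows "CBox (COr (CNeg (CBox (COr (CNeg A) C)))
     (CBox (COr (CNeg (CBox (COr (CNeg B) C))) (CBox (COr (CNeg (COr A B)) C))))) \<in> MS4_ext G"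
proof -
  let ?X = "CBox (COr (CNeg A) C)"
  let ?Y = "CBox (COr (CNeg B) C)"
  have 1: "CImp (CAnd (CAnd ?X ?Y) (COr A B)) C \<in> MS4_ext G"
    by (rule PR2[OF Tbox[of "COr (CNeg A) C"] Tbox[of "COr (CNeg B) C"]]) (auto simp: pd)
  have 2: "CImp (CAnd ?X ?Y) (CBox (COr (CNeg (COr A B)) C)) \<in> MS4_ext G"
    by (rule boxed_imp[OF boxed_and[OF boxed_box boxed_box] 1])
  show ?thesis by (rule nec_imp, rule boxed_imp[OF boxed_box 2])
qed
lemma ipc9: "CBox (COr (CNeg CBot) A) \<in> MS4_ext G"
  by (rule nec_imp, rule PR0) auto

section \<open>MIPC axioms\<close>

lemma m1a: "CBox (COr (CNeg (CBox (CAll (CAnd A B)))) (CAnd (CBox (CAll A)) (CBox (CAll B)))) \<in> MS4_ext G"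
proof -
  have 1: "CImp (CBox (CAll (CAnd A B))) (CBox (CAll A)) \<in> MS4_ext G" by (intro box_mono all_mono PR0) auto
  have 2: "CImp (CBox (CAll (CAnd A B))) (CBox (CAll B)) \<in> MS4_ext G" by (intro box_mono all_mono PR0) auto
  show ?thesis by (rule nec_imp, rule PR2[OF 1 2]) auto
qed
lemma m1b: "CBox (COr (CNeg (CAnd (CBox (CAll A)) (CBox (CAll B)))) (CBox (CAll (CAnd A B)))) \<in> MS4_ext G"
  by (rule nec_imp, rule box_mono2, rule all_and)
lemma m2: "CBox (COr (CNeg (CBox (CAll A))) A) \<in> MS4_ext G"
  by (rule nec_imp, rule PR2[OF Tbox Tall]) auto
lemma m3: "CBox (COr (CNeg (CBox (CAll A))) (CBox (CAll (CBox (CAll A))))) \<in> MS4_ext G"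
  by (rule nec_imp, rule PR2[OF Fbox box_mono[OF box_all_closed]]) auto
lemma m4a: "CBox (COr (CNeg (CEx (COr A B))) (COr (CEx A) (CEx B))) \<in> MS4_ext G"
  by (rule nec_imp, rule ex_or)
lemma m4b: "CBox (COr (CNeg (COr (CEx A) (CEx B))) (CEx (COr A B))) \<in> MS4_ext G"
  by (rule nec_imp, rule or_ex)
lemma m5: "CBox (COr (CNeg A) (CEx A)) \<in> MS4_ext G"
  by (rule nec_imp, rule exT)
lemma m6: "CBox (COr (CNeg (CEx (CEx A))) (CEx A)) \<in> MS4_ext G"
  by (rule nec_imp, rule ex4)
lemma m7: "CBox (COr (CNeg (CAnd (CEx A) (CEx B))) (CEx (CAnd (CEx A) B))) \<in> MS4_ext G"
  by (rule nec_imp, rule PR2[OF Vall all_ex[of "CEx A" B]]) auto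
lemma m8: "CBox (COr (CNeg (CEx (CBox (CAll A)))) (CBox (CAll A))) \<in> MS4_ext G"
  by (rule nec_imp, rule PR3[OF ex_mono[OF box_all_closed] ex_all_T Tall]) auto
lemma m9: assumes "boxed G A" shows "CBox (COr (CNeg (CEx A)) (CBox (CAll (CEx A)))) \<in> MS4_ext G"
  by (rule nec_imp, rule PR2[OF boxed_ex[OF assms, unfolded boxed_def] box_mono[OF Vall]]) auto

lemma and_in: "a \<in> MS4_ext G \<Longrightarrow> b \<in> MS4_ext G \<Longrightarrow> CAnd a b \<in> MS4_ext G"
  by (rule PR2) auto

abbreviation "kurax \<equiv> IImp (IAll (INeg (INeg ip))) (INeg (INeg (IAll ip)))"

lemma goedel_sound:
  assumes kur: "\<And>s. goedel (isubst s kurax) \<in> MS4_ext G"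
  shows "a \<in> Kur \<Longrightarrow> \<forall>s. goedel (isubst s a) \<in> MS4_ext G"
  unfolding Kur_def
proof (induction a rule: MIPC_ext.induct)
  case (ipc a)
  show ?case
  proof
    fix s :: "nat \<Rightarrow> ifm"
    have b: "\<And>n. boxed G (goedel (s n))" by (rule boxed_goedel)
    from ipc show "goedel (isubst s a) \<in> MS4_ext G"
      unfolding IPC_axioms_def
      by (auto intro: ipc1[OF b] ipc2[OF b b b] ipc3 ipc4 ipc5[OF b] ipc6 ipc7 ipc8 ipc9)
  qed
next
  case (ax a)
  show ?case
  proof
    fix s :: "nat \<Rightarrow> ifm"
    have b: "\<And>n. boxed G (goedel (s n))" by (rule boxed_goedel)
    from ax show "goedel (isubst s a) \<in> MS4_ext G"
      unfolding MIPC_axioms_def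
      by (auto simp: IIff_def intro: and_in[OF m1a m1b] and_in[OF m4a m4b] m2 m3 m5 m6 m7 m8 m9[OF b])
  qed
next
  case (extra a)
  then show ?case using kur by auto
next
  case (mp a b)
  show ?case
  proof
    fix s :: "nat \<Rightarrow> ifm"
    from mp.IH(1) have 1: "CBox (COr (CNeg (goedel (isubst s a))) (goedel (isubst s b))) \<in> MS4_ext G" by auto
    from mp.IH(2) have 2: "goedel (isubst s a) \<in> MS4_ext G" by auto
    show "goedel (isubst s b) \<in> MS4_ext G" by (rule PR2[OF Tb[OF 1] 2]) (auto simp: pd)
  qed
next
  case (subst a s')
  then show ?case by (simp add: isubst_comp)
next
  case (nec a)
  then show ?case by (auto intro: MS4_ext.nec_box MS4_ext.nec_all)
qed

section \<open>Grz, N, LKur\<close>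

abbreviation "grzax \<equiv> CImp (CBox (CImp (CBox (CImp cp (CBox cp))) cp)) cp"
abbreviation "nax \<equiv> CImp (CBox (CEx cp)) (CDia (CEx (CBox cp)))"
abbreviation "lkurax \<equiv> CImp (CBox (CAll (CDia (CBox cp)))) (CDia (CAll cp))"

lemma inst1: "a \<in> MS4_ext G \<Longrightarrow> csubst (\<lambda>n. q) a \<in> MS4_ext G"
  by (rule MS4_ext.subst)

lemma G1: assumes g: "grzax \<in> MS4_ext G"
  shows "CDia (CBox (CImp q (CBox q))) \<in> MS4_ext G"
proof -
  let ?s = "CImp q (CBox q)"
  let ?X = "CImp (CBox ?s) q"
  have g1: "CImp (CBox ?X) q \<in> MS4_ext G" using inst1[OF g, of q] by simp
  have a: "CImp (CBox (CNeg (CNeg ?X))) (CBox ?X) \<in> MS4_ext G" by (rule box_mono, rule PR0) (auto simp: pd)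
  have b: "CImp (CDia (CNeg ?X)) (CDia (CBox ?s)) \<in> MS4_ext G" by (rule dia_mono, rule PR0) (auto simp: pd)
  have nq: "CImp (CNeg q) (CDia (CBox ?s)) \<in> MS4_ext G" by (rule PR3[OF g1 a b]) (auto simp: pd)
  have c1: "CImp (CBox (CBox q)) (CBox ?s) \<in> MS4_ext G" by (rule box_mono, rule PR0) (auto simp: pd)
  have c: "CImp (CBox q) (CDia (CBox ?s)) \<in> MS4_ext G" by (rule PR3[OF c1 Fbox diaT]) auto
  have e: "CImp (CBox (CNeg (CNeg q))) (CBox q) \<in> MS4_ext G" by (rule box_mono, rule PR0) (auto simp: pd)
  have f: "CImp (CDia (CNeg q)) (CDia (CDia (CBox ?s))) \<in> MS4_ext G" by (rule dia_mono[OF nq])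
  show ?thesis by (rule PR5[OF nq c e f dia4]) (auto simp: pd)
qed

lemma Nform: assumes n: "nax \<in> MS4_ext G"
  shows "CImp (CBox (CAll (CDia x))) (CDia (CAll x)) \<in> MS4_ext G"
proof -
  have n1: "CImp (CBox (CEx (CNeg x))) (CDia (CEx (CBox (CNeg x)))) \<in> MS4_ext G"
    using inst1[OF n, of "CNeg x"] by simp
  have 1: "CImp (CAll (CNeg (CNeg x))) (CAll x) \<in> MS4_ext G" by (rule all_mono, rule PR0) (auto simp: pd)
  have 2: "CImp (CBox (CNeg (CAll x))) (CBox (CEx (CNeg x))) \<in> MS4_ext G"
    by (rule box_mono, rule PR1[OF 1]) (auto simp: pd)
  have 3: "CImp (CBox (CAll (CDia x))) (CBox (CNeg (CEx (CBox (CNeg x))))) \<in> MS4_ext G"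
    by (rule box_mono, rule PR0) (auto simp: pd)
  show ?thesis by (rule PR3[OF n1 2 3]) (auto simp: pd)
qed

lemma N_from_LKur: assumes g: "grzax \<in> MS4_ext G" and l: "lkurax \<in> MS4_ext G"
  shows "CImp (CBox (CEx q)) (CDia (CEx (CBox q))) \<in> MS4_ext G"
proof -
  let ?s = "CImp q (CBox q)"
  have l1: "CImp (CBox (CAll (CDia (CBox ?s)))) (CDia (CAll ?s)) \<in> MS4_ext G"
    using inst1[OF l, of ?s] by simp
  have h: "CBox (CAll (CDia (CBox ?s))) \<in> MS4_ext G"
    by (intro MS4_ext.nec_box MS4_ext.nec_all G1[OF g])
  have d: "CDia (CAll ?s) \<in> MS4_ext G" by (rule mp'[OF l1 h])
  have e1: "CImp (CEx (CAnd ?s q)) (CEx (CBox q)) \<in> MS4_ext G" by (rule ex_mono, rule PR0) auto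
  have e: "CImp (CAnd (CEx q) (CAll ?s)) (CEx (CBox q)) \<in> MS4_ext G"
    by (rule PR2[OF all_ex[of ?s q] e1]) auto
  show ?thesis by (rule PR3[OF d box_dia[of "CEx q" "CAll ?s"] dia_mono[OF e]]) auto
qed

lemma kur_from_N: assumes g: "grzax \<in> MS4_ext G" and n: "nax \<in> MS4_ext G" and A: "boxed G A"
  shows "CBox (COr (CNeg (CBox (CAll (CBox (COr (CNeg (CBox (COr (CNeg A) CBot))) CBot)))))
     (CBox (COr (CNeg (CBox (COr (CNeg (CBox (CAll A))) CBot))) CBot))) \<in> MS4_ext G"
proof -
  let ?t = "CImp (CAll A) (CBox (CAll A))"
  let ?r = "CAnd A ?t"
  let ?H = "CBox (CAll (CBox (COr (CNeg (CBox (COr (CNeg A) CBot))) CBot)))"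
  let ?Cc = "CBox (COr (CNeg (CBox (COr (CNeg (CBox (CAll A))) CBot))) CBot)"
  have gt: "CDia (CBox ?t) \<in> MS4_ext G" by (rule G1[OF g])
  have d1: "CImp (CAnd A (CBox ?t)) (CAnd A ?t) \<in> MS4_ext G" by (rule PR1[OF Tbox[of ?t]]) auto
  have s1: "CImp A (CDia ?r) \<in> MS4_ext G"
    by (rule PR4[OF A[unfolded boxed_def] gt box_dia[of A "CBox ?t"] dia_mono[OF d1]]) auto
  have s2: "CImp (CDia A) (CDia ?r) \<in> MS4_ext G" by (rule PR2[OF dia_mono[OF s1] dia4]) auto
  have c1: "CImp (CBox (CNeg A)) (CBox (COr (CNeg A) CBot)) \<in> MS4_ext G" by (rule box_mono, rule PR0) (auto simp: pd)
  have c2: "CImp (CBox (COr (CNeg (CBox (COr (CNeg A) CBot))) CBot)) (CDia ?r) \<in> MS4_ext G"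
    by (rule PR3[OF Tbox c1 s2]) (auto simp: pd)
  have s3: "CImp ?H (CBox (CAll (CDia ?r))) \<in> MS4_ext G" by (rule box_mono, rule all_mono, rule c2)
  have s4: "CImp (CBox (CAll (CDia ?r))) (CDia (CAll ?r)) \<in> MS4_ext G" by (rule Nform[OF n])
  have a1: "CImp (CAll ?r) (CAll A) \<in> MS4_ext G" by (rule all_mono, rule PR0) auto
  have a2: "CImp (CAll ?r) (CAll ?t) \<in> MS4_ext G" by (rule all_mono, rule PR0) auto
  have s5: "CImp (CAll ?r) (CBox (CAll A)) \<in> MS4_ext G" by (rule PR3[OF a1 a2 Tall]) auto
  have s6: "CImp ?H (CDia (CBox (CAll A))) \<in> MS4_ext G" by (rule PR3[OF s3 s4 dia_mono[OF s5]]) auto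
  have s7: "CImp ?H (CBox (CDia (CBox (CAll A)))) \<in> MS4_ext G" by (rule PR2[OF Fbox box_mono[OF s6]]) auto
  have c3: "CImp (CBox (COr (CNeg (CBox (CAll A))) CBot)) (CBox (CNeg (CBox (CAll A)))) \<in> MS4_ext G"
    by (rule box_mono, rule PR0) (auto simp: pd)
  have c4: "CImp (CDia (CBox (CAll A))) (COr (CNeg (CBox (COr (CNeg (CBox (CAll A))) CBot))) CBot) \<in> MS4_ext G"
    by (rule PR1[OF c3]) (auto simp: pd)
  show ?thesis by (rule nec_imp, rule PR2[OF s7 box_mono[OF c4]]) auto
qed

lemma LKur_from_KurT:
  assumes k: "goedel kurax \<in> MS4_ext G"
  shows "lkurax \<in> MS4_ext G"
proof -
  let ?Y = "CDia (CBox cp)"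
  have k1: "CImp (CBox (CAll ?Y)) (CBox (CAll (CBox ?Y))) \<in> MS4_ext G"
    by (rule PR2[OF Fbox box_mono[OF BC]]) auto
  have c1: "CImp (CBox (COr (CNeg (CBox cp)) CBot)) (CBox (CNeg (CBox cp))) \<in> MS4_ext G"
    by (rule box_mono, rule PR0) (auto simp: pd)
  have c2: "CImp ?Y (COr (CNeg (CBox (COr (CNeg (CBox cp)) CBot))) CBot) \<in> MS4_ext G"
    by (rule PR1[OF c1]) (auto simp: pd)
  have k2: "CImp (CBox (CAll (CBox ?Y))) (CBox (CAll (CBox (COr (CNeg (CBox (COr (CNeg (CBox cp)) CBot))) CBot)))) \<in> MS4_ext G"
    by (intro box_mono all_mono c2)
  have c3: "CImp (CBox (CNeg (CBox (CAll (CBox cp))))) (CBox (COr (CNeg (CBox (CAll (CBox cp)))) CBot)) \<in> MS4_ext G"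
    by (rule box_mono, rule PR0) (auto simp: pd)
  have c4: "CImp (CBox (CAll (CBox cp))) (CAll cp) \<in> MS4_ext G"
    by (rule PR2[OF Tbox all_mono[OF Tbox]]) auto
  let ?H = "CBox (CAll (CBox (COr (CNeg (CBox (COr (CNeg (CBox cp)) CBot))) CBot)))"
  let ?Cc = "CBox (COr (CNeg (CBox (COr (CNeg (CBox (CAll (CBox cp)))) CBot))) CBot)"
  have kk: "CBox (COr (CNeg ?H) ?Cc) \<in> MS4_ext G" using k by (simp add: INeg_def)
  have k3: "CImp ?Cc (CDia (CBox (CAll (CBox cp)))) \<in> MS4_ext G"
    by (rule PR2[OF Tbox c3]) (auto simp: pd)
  show ?thesis
    by (rule PR5[OF Tb[OF kk] k1 k2 k3 dia_mono[OF c4]]) (auto simp: pd)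
qed

section \<open>Joins\<close>

lemma ext_mono: assumes "G \<subseteq> MS4_ext H" shows "MS4_ext G \<subseteq> MS4_ext H"
proof
  fix a assume "a \<in> MS4_ext G"
  then show "a \<in> MS4_ext H"
    by (induction a rule: MS4_ext.induct) (use assms in \<open>auto intro: MS4_ext.intros\<close>)
qed

lemma ext_join: "G \<subseteq> join L1 L2 \<Longrightarrow> MS4_ext G \<subseteq> join L1 L2"
  unfolding join_def by (rule ext_mono)

lemma in_join1: "a \<in> L1 \<Longrightarrow> a \<in> join L1 L2" unfolding join_def by (auto intro: MS4_ext.extra)
lemma in_join2: "a \<in> L2 \<Longrightarrow> a \<in> join L1 L2" unfolding join_def by (auto intro: MS4_ext.extra)

lemma grz_in: "grzax \<in> join MGrz L" by (rule in_join1) (simp add: MGrz_def MS4_ext.extra)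

lemma join_sub: assumes "L1 \<subseteq> join MGrz L" "L2 \<subseteq> join MGrz L" shows "join L1 L2 \<subseteq> join MGrz L"
  unfolding join_def by (rule ext_mono) (use assms in \<open>auto simp: join_def\<close>)

lemma MGrz_sub: "MGrz \<subseteq> join MGrz L" by (auto intro: in_join1)

lemma XY: "join MGrz LKur \<subseteq> join MGrz GKur"
proof -
  have k: "goedel kurax \<in> join MGrz GKur"
    unfolding GKur_def Kur_def by (rule in_join2, rule MS4_ext.extra, rule imageI, rule MIPC_ext.extra, simp)
  have "LKur \<subseteq> join MGrz GKur" unfolding LKur_def
    by (rule ext_join) (use LKur_from_KurT[OF k[unfolded join_def]] in \<open>auto simp: join_def\<close>)
  then show ?thesis by (intro join_sub MGrz_sub)
qed

lemma ZY: "join MGrz Nlogic \<subseteq> join MGrz LKur"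
proof -
  have l: "lkurax \<in> join MGrz LKur" by (rule in_join2) (auto simp: LKur_def intro: MS4_ext.extra)
  have "Nlogic \<subseteq> join MGrz LKur" unfolding Nlogic_def
    by (rule ext_join) (use N_from_LKur[OF grz_in[unfolded join_def] l[unfolded join_def], of cp] in \<open>auto simp: join_def\<close>)
  then show ?thesis by (intro join_sub MGrz_sub)
qed

lemma XZ: "join MGrz GKur \<subseteq> join MGrz Nlogic"
proof -
  have n: "nax \<in> join MGrz Nlogic" by (rule in_join2) (auto simp: Nlogic_def intro: MS4_ext.extra)
  have k: "goedel (isubst s kurax) \<in> join MGrz Nlogic" for s
    using kur_from_N[OF grz_in[unfolded join_def] n[unfolded join_def] boxed_goedel[of _ "s 0"]]
    by (simp add: join_def INeg_def)
  have "goedel a \<in> join MGrz Nlogic" if "a \<in> Kur" for a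
    using goedel_sound[OF k[unfolded join_def] that] isubst_id[of a] unfolding join_def by metis
  then have "GKur \<subseteq> join MGrz Nlogic" unfolding GKur_def
    by (intro ext_join) auto
  then show ?thesis by (intro join_sub MGrz_sub)
qed

theorem proposition5p10:
  shows "join MGrz GKur = join MGrz LKur \<and> join MGrz LKur = join MGrz Nlogic"
  using XY ZY XZ by blast

end
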